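(* Let $(X,d)$ be a pointed metric space and let $((x_i,y_i))_{i\in I}$ be a Lipschitz interpolating family in $\widetilde X$ for $\mathrm{Lip}_0(X)$. Then there exists $\delta>0$ (depending on the family) such that every family $((u_i,v_i))_{i\in I}$ in $\widetilde X$ satisfying $\rho((x_i,y_i),(u_i,v_i))<\delta$ for all $i\in I$ is also Lipschitz interpolating for $\mathrm{Lip}_0(X)$.
   Context: All spaces are real. $(X,d)$ is a metric space with base point $0$, $\widetilde{X}=\{(x,y)\in X\times X: x\neq y\}$. $\mathrm{Lip}_0(X)$ is the Banach space of Lipschitz $f:X\to\mathbb{R}$ with $f(0)=0$, normed by $\|f\|=\sup_{(x,y)\in\widetilde X}|f(x)-f(y)|/d(x,y)$. For $x\in X$, $\delta_x\in\mathrm{Lip}_0(X)^*$ is $\delta_x(f)=f(x)$; for $(x,y)\in\widetilde X$, $m_{x,y}=(\delta_x-\delta_y)/d(x,y)\in\mathrm{Lip}_0(X)^*$. The Lipschitz-molecular metric on $\widetilde X$ is $\rho((x,y),(u,v))=\|m_{x,y}-m_{u,v}\|$ (dual norm). For a family $((x_i,y_i))_{i\in I}$ in $\widetilde X$, its Lipschitz interpolating operator is $T:\mathrm{Lip}_0(X)\to\ell_\infty(I)$, $T(f)=\big((f(x_i)-f(y_i))/d(x_i,y_i)\big)_{i\in I}$, and the family is Lipschitz interpolating for $\mathrm{Lip}_0(X)$ if $T$ is surjective. *)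

theory Defs
  imports "HOL-Analysis.Analysis"
begin

text \<open>The pointed metric space is the type 'a (class metric_space) with base point p.\<close>

definition lip0 :: "'a::metric_space \<Rightarrow> ('a \<Rightarrow> real) \<Rightarrow> bool" where
  "lip0 p f \<longleftrightarrow> f p = 0 \<and> (\<exists>L. \<forall>x y. \<bar>f x - f y\<bar> \<le> L * dist x y)"

text \<open>Lipschitz norm (supremum over pairs of distinct points; 0 added so a one-point space gives 0).\<close>
definition lipnorm :: "('a::metric_space \<Rightarrow> real) \<Rightarrow> real" where
  "lipnorm f = Sup (insert 0 {\<bar>f x - f y\<bar> / dist x y | x y. x \<noteq> y})"

definition mol :: "'a::metric_space \<Rightarrow> 'a \<Rightarrow> ('a \<Rightarrow> real) \<Rightarrow> real" where
  "mol x y f = (f x - f y) / dist x y"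

text \<open>Lipschitz-molecular metric: dual norm of m_{x,y} - m_{u,v} on Lip_0(X).\<close>
definition mol_dist :: "'a::metric_space \<Rightarrow> 'a \<times> 'a \<Rightarrow> 'a \<times> 'a \<Rightarrow> real" where
  "mol_dist p xy uv = Sup {\<bar>mol (fst xy) (snd xy) f - mol (fst uv) (snd uv) f\<bar> | f.
      lip0 p f \<and> lipnorm f \<le> 1}"

definition lip_interpolating :: "'a::metric_space \<Rightarrow> ('i \<Rightarrow> 'a) \<Rightarrow> ('i \<Rightarrow> 'a) \<Rightarrow> bool" where
  "lip_interpolating p x y \<longleftrightarrow>
     (\<forall>a :: 'i \<Rightarrow> real. bounded (range a) \<longrightarrow>
        (\<exists>f. lip0 p f \<and> (\<forall>i. mol (x i) (y i) f = a i)))"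

end

theory Submission
  imports Defs
begin


lemma baire_linf:
  fixes A :: "nat \<Rightarrow> ('i \<Rightarrow> real) set"
  assumes cover: "\<And>b. bounded (range b) \<Longrightarrow> \<exists>n. b \<in> A n"
    and sub: "\<And>n c. c \<in> A n \<Longrightarrow> bounded (range c)"
  shows "\<exists>n b0 r. r > 0 \<and> bounded (range b0) \<and> (\<forall>b. bounded (range b) \<and> (\<forall>i. \<bar>b i - b0 i\<bar> \<le> r)
           \<longrightarrow> (\<forall>e>0. \<exists>c\<in>A n. \<forall>i. \<bar>b i - c i\<bar> \<le> e))"
proof (rule ccontr)
  assume neg: "\<not> ?thesis"
  interpret F: Metric_space "Met_TC.fspace (UNIV::'i set)" "Met_TC.fdist (UNIV::'i set) :: ('i \<Rightarrow> real) \<Rightarrow> _"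
    by (rule Met_TC.Metric_space_funspace)
  have FS: "Met_TC.fspace (UNIV::'i set) = {b::'i\<Rightarrow>real. bounded (range b)}"
    by (auto simp: Met_TC.fspace_def)
  have comp: "F.mcomplete"
    using Met_TC.mcomplete_funspace[of "UNIV::'i set"] complete_UNIV
    by (simp add: mcomplete_of_def)
  have le: "Met_TC.fdist UNIV b c \<le> a \<longleftrightarrow> (\<forall>i. \<bar>b i - c i\<bar> \<le> a)"
    if "bounded (range b)" "bounded (range (c::'i\<Rightarrow>real))" for b c a
    using Met_TC.funspace_mdist_le[of b UNIV c a] that FS by (simp add: dist_real_def)
  define G where "G = range (\<lambda>n. F.mtopology closure_of A n)"
  have "F.mtopology interior_of \<Union>G = {}"
  proof (rule F.metric_Baire_category_alt[OF comp])
    show "countable G" unfolding G_def by simp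
    fix T assume "T \<in> G"
    then obtain n where T: "T = F.mtopology closure_of A n" unfolding G_def by auto
    show "closedin F.mtopology T \<and> F.mtopology interior_of T = {}"
    proof
      show "closedin F.mtopology T" using T by simp
      show "F.mtopology interior_of T = {}"
      proof (rule ccontr)
        assume "F.mtopology interior_of T \<noteq> {}"
        then obtain x eps where x: "x \<in> Met_TC.fspace UNIV" "eps > 0" "F.mball x eps \<subseteq> T"
          unfolding F.metric_interior_of by auto
        have "\<exists>n b0 r. r > 0 \<and> bounded (range b0) \<and> (\<forall>b. bounded (range b) \<and> (\<forall>i. \<bar>b i - b0 i\<bar> \<le> r)
           \<longrightarrow> (\<forall>e>0. \<exists>c\<in>A n. \<forall>i. \<bar>b i - c i\<bar> \<le> e))"
        proof (intro exI conjI allI impI)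
          show "eps/2 > 0" using x by simp
          show xb: "bounded (range x)" using x FS by auto
          fix b e assume b: "bounded (range b) \<and> (\<forall>i. \<bar>b i - x i\<bar> \<le> eps/2)" and e: "(e::real) > 0"
          have "\<forall>i. \<bar>x i - b i\<bar> \<le> eps/2" using b by (simp add: abs_minus_commute)
          then have "Met_TC.fdist UNIV x b \<le> eps/2" using le[OF xb, of b] b by blast
          moreover have "b \<in> Met_TC.fspace UNIV" using b FS by auto
          ultimately have "b \<in> F.mball x eps" using x unfolding F.in_mball by linarith
          with x T have "b \<in> F.mtopology closure_of A n" by auto
          then obtain c where c: "c \<in> A n" "c \<in> F.mball b e" using e unfolding F.metric_closure_of by blast
          then have "Met_TC.fdist UNIV b c \<le> e" by simp
          then show "\<exists>c\<in>A n. \<forall>i. \<bar>b i - c i\<bar> \<le> e" using le[OF _ sub[OF c(1)]] b c by blast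
        qed
        with neg show False by blast
      qed
    qed
  qed
  moreover have "\<Union>G = Met_TC.fspace UNIV"
  proof
    show "\<Union>G \<subseteq> Met_TC.fspace UNIV" unfolding G_def
      using closure_of_subset_topspace by fastforce
    show "Met_TC.fspace UNIV \<subseteq> \<Union>G"
    proof
      fix b :: "'i \<Rightarrow> real" assume "b \<in> Met_TC.fspace (UNIV::'i set)"
      then obtain n where "b \<in> A n" using cover FS by auto
      moreover have "A n \<subseteq> topspace F.mtopology" unfolding F.topspace_mtopology using sub FS by auto
      ultimately have "b \<in> F.mtopology closure_of A n" using closure_of_subset by blast
      then show "b \<in> \<Union>G" unfolding G_def by blast
    qed
  qed
  moreover have "(\<lambda>i. 0::real) \<in> Met_TC.fspace (UNIV::'i set)" using FS by simp
  ultimately show False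
    by (metis F.topspace_mtopology empty_iff interior_of_topspace)
qed



lemma lip0_bdd:
  assumes "lip0 p f"
  shows "bdd_above (insert 0 {\<bar>f x - f y\<bar> / dist x y | x y. x \<noteq> y})"
proof -
  obtain L where L: "\<forall>x y. \<bar>f x - f y\<bar> \<le> L * dist x y" using assms unfolding lip0_def by auto
  have "\<bar>f x - f y\<bar> / dist x y \<le> max L 0" if "x \<noteq> y" for x y
  proof -
    have "\<bar>f x - f y\<bar> \<le> max L 0 * dist x y"
      using L[rule_format, of x y] mult_right_mono[of L "max L 0" "dist x y"] by simp
    then show ?thesis using that by (simp add: divide_le_eq)
  qed
  then show ?thesis unfolding bdd_above_def by (intro exI[of _ "max L 0"]) auto
qed

lemma lipnorm_nonneg: "lip0 p f \<Longrightarrow> lipnorm f \<ge> 0"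
  unfolding lipnorm_def by (rule cSup_upper[OF _ lip0_bdd]) auto

lemma lipnorm_bound:
  assumes "lip0 p f" shows "\<bar>f x - f y\<bar> \<le> lipnorm f * dist x y"
proof (cases "x = y")
  case False
  have "\<bar>f x - f y\<bar> / dist x y \<le> lipnorm f"
    unfolding lipnorm_def using False by (intro cSup_upper[OF _ lip0_bdd[OF assms]]) auto
  then show ?thesis using False by (simp add: divide_le_eq)
qed simp

lemma lipnorm_le:
  assumes "\<And>x y. \<bar>f x - f y\<bar> \<le> L * dist x y" "L \<ge> 0"
  shows "lipnorm f \<le> L"
  unfolding lipnorm_def
proof (rule cSup_least)
  fix z assume "z \<in> insert 0 {\<bar>f x - f y\<bar> / dist x y | x y. x \<noteq> y}"
  then show "z \<le> L" using assms by (auto simp: divide_le_eq)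
qed auto

lemma lip0_I: "f p = 0 \<Longrightarrow> (\<And>x y. \<bar>f x - f y\<bar> \<le> L * dist x y) \<Longrightarrow> lip0 p f"
  unfolding lip0_def by blast

lemma lip0_scale:
  assumes "lip0 p f" shows "lip0 p (\<lambda>z. c * f z)" and "lipnorm (\<lambda>z. c * f z) \<le> \<bar>c\<bar> * lipnorm f"
proof -
  have *: "\<bar>c * f x - c * f y\<bar> \<le> (\<bar>c\<bar> * lipnorm f) * dist x y" for x y
  proof -
    have "\<bar>c * f x - c * f y\<bar> = \<bar>c\<bar> * \<bar>f x - f y\<bar>" by (simp add: abs_mult[symmetric] right_diff_distrib)
    also have "\<dots> \<le> \<bar>c\<bar> * (lipnorm f * dist x y)" by (rule mult_left_mono[OF lipnorm_bound[OF assms]]) simp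
    finally show ?thesis by simp
  qed
  show "lip0 p (\<lambda>z. c * f z)"
  proof (rule lip0_I[OF _ *])
    show "c * f p = 0" using assms by (simp add: lip0_def)
  qed
  show "lipnorm (\<lambda>z. c * f z) \<le> \<bar>c\<bar> * lipnorm f"
    by (rule lipnorm_le[OF *]) (simp add: lipnorm_nonneg[OF assms])
qed

lemma lip0_diff:
  assumes "lip0 p f" "lip0 p g" shows "lip0 p (\<lambda>z. f z - g z)" and "lipnorm (\<lambda>z. f z - g z) \<le> lipnorm f + lipnorm g"
proof -
  have *: "\<bar>(f x - g x) - (f y - g y)\<bar> \<le> (lipnorm f + lipnorm g) * dist x y" for x y
    using lipnorm_bound[OF assms(1), of x y] lipnorm_bound[OF assms(2), of x y]
    by (simp add: distrib_right)
  show "lip0 p (\<lambda>z. f z - g z)" using assms * unfolding lip0_def by auto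
  show "lipnorm (\<lambda>z. f z - g z) \<le> lipnorm f + lipnorm g"
    by (rule lipnorm_le[OF *]) (simp add: lipnorm_nonneg[OF assms(1)] lipnorm_nonneg[OF assms(2)])
qed

lemma lip0_zero: "lip0 p (\<lambda>z. 0)" "lipnorm (\<lambda>z::'a::metric_space. 0::real) \<le> 0"
  unfolding lip0_def by (auto intro: lipnorm_le exI[of _ 0])

lemma mol_bound: "lip0 p f \<Longrightarrow> \<bar>mol x y f\<bar> \<le> lipnorm f"
  unfolding mol_def using lipnorm_bound[of p f x y]
  by (cases "x = y") (auto simp: divide_le_eq lipnorm_nonneg)

lemma mol_dist_bound:
  assumes f: "lip0 p f"
  shows "\<bar>mol x y f - mol u v f\<bar> \<le> mol_dist p (x,y) (u,v) * lipnorm f"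
proof (cases "lipnorm f = 0")
  case True
  then have "f a - f b = 0" for a b using lipnorm_bound[OF f, of a b] by simp
  then have "mol a b f = 0" for a b unfolding mol_def by (metis div_0)
  then show ?thesis by (simp add: True)
next
  case False
  then have pos: "lipnorm f > 0" using lipnorm_nonneg[OF f] by simp
  define h where "h = (\<lambda>z. (1 / lipnorm f) * f z)"
  have h: "lip0 p h" "lipnorm h \<le> 1"
    using lip0_scale[OF f, of "1 / lipnorm f"] pos unfolding h_def by auto
  have mh: "mol a b h = mol a b f / lipnorm f" for a b
    unfolding mol_def h_def by (simp add: diff_divide_distrib[symmetric])
  define S where "S = {\<bar>mol x y g - mol u v g\<bar> |g. lip0 p g \<and> lipnorm g \<le> 1}"
  have MS: "mol_dist p (x,y) (u,v) = Sup S" unfolding mol_dist_def S_def by simp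
  have "\<bar>mol x y h - mol u v h\<bar> \<le> Sup S"
  proof (rule cSup_upper)
    show "\<bar>mol x y h - mol u v h\<bar> \<in> S" using h unfolding S_def by auto
    show "bdd_above S" unfolding S_def
    proof (rule bdd_aboveI[of _ 2], clarsimp)
      fix g assume "lip0 p g" "lipnorm g \<le> 1"
      then show "\<bar>mol x y g - mol u v g\<bar> \<le> 2" using mol_bound[of p g x y] mol_bound[of p g u v] by linarith
    qed
  qed
  then have "\<bar>mol x y h - mol u v h\<bar> \<le> mol_dist p (x,y) (u,v)" using MS by simp
  then show ?thesis using pos unfolding mh by (simp add: diff_divide_distrib[symmetric] divide_le_eq)
qed



lemma iterate_interp:
  fixes u v :: "'i \<Rightarrow> 'a::metric_space"
  assumes C: "C \<ge> 0"
  and P: "\<And>b \<beta>. \<beta> \<ge> 0 \<Longrightarrow> (\<forall>i. \<bar>b i\<bar> \<le> \<beta>) \<Longrightarrow>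
     \<exists>f. lip0 p f \<and> lipnorm f \<le> C*\<beta> \<and> (\<forall>i. \<bar>mol (u i) (v i) f - b i\<bar> \<le> \<beta>/2)"
  shows "lip_interpolating p u v"
  unfolding lip_interpolating_def
proof (intro allI impI)
  fix a :: "'i \<Rightarrow> real" assume "bounded (range a)"
  then obtain B where aB: "\<And>i. \<bar>a i\<bar> \<le> B" unfolding bounded_iff by auto
  have B0: "B \<ge> 0" using aB[of undefined] by simp
  define F where "F b \<beta> = (SOME f. lip0 p f \<and> lipnorm f \<le> C*\<beta> \<and> (\<forall>i. \<bar>mol (u i) (v i) f - b i\<bar> \<le> \<beta>/2))" for b \<beta>
  have F: "lip0 p (F b \<beta>) \<and> lipnorm (F b \<beta>) \<le> C*\<beta> \<and> (\<forall>i. \<bar>mol (u i) (v i) (F b \<beta>) - b i\<bar> \<le> \<beta>/2)"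
    if "\<beta> \<ge> 0" "\<forall>i. \<bar>b i\<bar> \<le> \<beta>" for b \<beta>
    unfolding F_def by (rule someI_ex[OF P[OF that]])
  define bs :: "nat \<Rightarrow> 'i \<Rightarrow> real" where
    "bs = rec_nat a (\<lambda>k b. (\<lambda>i. b i - mol (u i) (v i) (F b (B/2^k))))"
  have bs0: "bs 0 = a" and bsS: "bs (Suc k) = (\<lambda>i. bs k i - mol (u i) (v i) (F (bs k) (B/2^k)))" for k
    unfolding bs_def by simp_all
  have bsB: "\<forall>i. \<bar>bs k i\<bar> \<le> B/2^k" for k
  proof (induction k)
    case 0 then show ?case using aB bs0 by simp
  next
    case (Suc k)
    have "\<bar>bs (Suc k) i\<bar> \<le> B/2^Suc k" for i
    proof -
      have h: "\<bar>mol (u i) (v i) (F (bs k) (B/2^k)) - bs k i\<bar> \<le> (B/2^k)/2"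
        using F[of "B/2^k" "bs k"] Suc B0 by simp
      have "bs (Suc k) i = bs k i - mol (u i) (v i) (F (bs k) (B/2^k))" unfolding bsS ..
      then have e1: "\<bar>bs (Suc k) i\<bar> = \<bar>mol (u i) (v i) (F (bs k) (B/2^k)) - bs k i\<bar>"
        by (simp only: abs_minus_commute)
      have e2: "(B/2^k)/2 = B/2^Suc k" by simp
      show ?thesis using h e1 e2 by linarith
    qed
    then show ?case by blast
  qed
  define fk where "fk k = F (bs k) (B/2^k)" for k
  define c where "c k = C*B*(1/2)^k" for k
  have fk: "lip0 p (fk k)" "lipnorm (fk k) \<le> c k" for k
    using F[OF _ bsB[of k]] B0 unfolding fk_def c_def by (auto simp: power_one_over)
  have fkm: "mol (u i) (v i) (fk k) = bs k i - bs (Suc k) i" for k i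
    unfolding fk_def bsS by simp
  have csum: "summable c" unfolding c_def by (intro summable_mult summable_geometric) simp
  have cval: "suminf c = 2*C*B"
  proof -
    have g: "summable (\<lambda>k. (1/2::real)^k)" by (rule summable_geometric) simp
    have "suminf c = C*B * (\<Sum>k. (1/2::real)^k)" unfolding c_def by (rule suminf_mult[OF g])
    also have "(\<Sum>k. (1/2::real)^k) = 2" by (subst suminf_geometric) simp_all
    finally show ?thesis by simp
  qed
  have fkL: "\<bar>fk k z - fk k w\<bar> \<le> c k * dist z w" for k z w
  proof -
    have "lipnorm (fk k) * dist z w \<le> c k * dist z w" by (rule mult_right_mono[OF fk(2)]) simp
    then show ?thesis using lipnorm_bound[OF fk(1), of k z w] by linarith
  qed
  have sabs: "summable (\<lambda>k. \<bar>fk k z - fk k w\<bar>)" for z w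
    by (rule summable_rabs_comparison_test[OF _ summable_mult2[OF csum, of "dist z w"]]) (intro exI[of _ 0] allI impI fkL)
  have sdiff: "summable (\<lambda>k. fk k z - fk k w)" for z w
    by (rule summable_rabs_cancel[OF sabs])
  have fkp: "fk k p = 0" for k using fk(1)[of k] by (simp add: lip0_def)
  have sz: "summable (\<lambda>k. fk k z)" for z using sdiff[of z p] fkp by simp
  define g where "g z = (\<Sum>k. fk k z)" for z
  have gdiff: "g z - g w = (\<Sum>k. fk k z - fk k w)" for z w
    unfolding g_def by (rule suminf_diff[OF sz sz])
  have "\<bar>g z - g w\<bar> \<le> (2*C*B) * dist z w" for z w
  proof -
    have "\<bar>g z - g w\<bar> \<le> (\<Sum>k. \<bar>fk k z - fk k w\<bar>)" unfolding gdiff by (rule summable_rabs[OF sabs])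
    also have "\<dots> \<le> (\<Sum>k. c k * dist z w)"
      by (rule suminf_le[OF fkL sabs summable_mult2[OF csum]])
    also have "\<dots> = (2*C*B) * dist z w" using suminf_mult2[OF csum, of "dist z w"] cval by simp
    finally show ?thesis .
  qed
  moreover have "g p = 0" unfolding g_def fkp by simp
  ultimately have "lip0 p g" by (intro lip0_I)
  moreover have "mol (u i) (v i) g = a i" for i
  proof -
    have "(\<lambda>k. fk k (u i) - fk k (v i)) sums (g (u i) - g (v i))"
      unfolding gdiff by (rule summable_sums[OF sdiff])
    then have s1: "(\<lambda>k. mol (u i) (v i) (fk k)) sums (mol (u i) (v i) g)"
      unfolding mol_def by (rule sums_divide)
    have "(\<lambda>n. B / 2^n) \<longlonglongrightarrow> 0" by (rule LIMSEQ_divide_realpow_zero) simp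
    then have "(\<lambda>n. bs n i) \<longlonglongrightarrow> 0"
      by (rule Lim_null_comparison[rotated], intro always_eventually allI) (simp add: bsB)
    then have "(\<lambda>n. bs 0 i - bs n i) \<longlonglongrightarrow> bs 0 i - 0" by (intro tendsto_intros)
    then have "(\<lambda>k. mol (u i) (v i) (fk k)) sums a i"
      unfolding sums_def fkm sum_lessThan_telescope'[of "\<lambda>k. bs k i"] using bs0 by simp
    with s1 show ?thesis by (rule sums_unique2)
  qed
  ultimately show "\<exists>f. lip0 p f \<and> (\<forall>i. mol (u i) (v i) f = a i)" by blast
qed



lemma mol_diff: "mol a b (\<lambda>z. f z - g z) = mol a b f - mol a b g"
  unfolding mol_def by (simp add: diff_divide_distrib[symmetric] algebra_simps)

lemma mol_scale: "mol a b (\<lambda>z. c * f z) = c * mol a b f"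
  unfolding mol_def by (simp add: right_diff_distrib[symmetric])

lemma mol_zero: "mol a b (\<lambda>z. 0) = 0"
  unfolding mol_def by simp

theorem proposition3p21:
  fixes p :: "'a::metric_space" and x y :: "'i \<Rightarrow> 'a"
  assumes "\<forall>i. x i \<noteq> y i"
    and "lip_interpolating p x y"
  shows "\<exists>\<delta>>0. \<forall>u v :: 'i \<Rightarrow> 'a.
           (\<forall>i. u i \<noteq> v i) \<and> (\<forall>i. mol_dist p (x i, y i) (u i, v i) < \<delta>)
           \<longrightarrow> lip_interpolating p u v"
proof -
  define T where "T f = (\<lambda>i. mol (x i) (y i) f)" for f
  define A where "A n = {T f | f. lip0 p f \<and> lipnorm f \<le> real n}" for n :: nat
  have cover: "\<exists>n. b \<in> A n" if bd: "bounded (range b)" for b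
  proof -
    obtain f where f: "lip0 p f" "\<forall>i. mol (x i) (y i) f = b i"
      using assms(2) bd unfolding lip_interpolating_def by blast
    have "T f = b" using f(2) unfolding T_def by auto
    moreover have "lipnorm f \<le> real (nat \<lceil>lipnorm f\<rceil>)" by (rule real_nat_ceiling_ge)
    ultimately have "b \<in> A (nat \<lceil>lipnorm f\<rceil>)" unfolding A_def using f(1) by blast
    then show ?thesis by blast
  qed
  have sub: "bounded (range c)" if cA: "c \<in> A n" for n c
  proof -
    obtain f where f: "c = T f" "lip0 p f" "lipnorm f \<le> real n" using cA unfolding A_def by blast
    have "\<forall>z\<in>range c. norm z \<le> real n"
      using f mol_bound[OF f(2)] unfolding T_def by (auto intro: order_trans)
    then show ?thesis unfolding bounded_iff by blast
  qed
  have ex: "\<exists>n b0 r. r > 0 \<and> bounded (range b0) \<and> (\<forall>b. bounded (range b) \<and> (\<forall>i. \<bar>b i - b0 i\<bar> \<le> r)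
           \<longrightarrow> (\<forall>e>0. \<exists>c\<in>A n. \<forall>i. \<bar>b i - c i\<bar> \<le> e))"
    by (rule baire_linf[of A]) (auto intro: cover sub)
  obtain n b0 r where r: "r > 0" and b0: "bounded (range b0)"
    and approx0: "\<And>b e. bounded (range b) \<Longrightarrow> (\<forall>i. \<bar>b i - b0 i\<bar> \<le> r) \<Longrightarrow> e > 0 \<Longrightarrow>
        \<exists>c\<in>A n. \<forall>i. \<bar>b i - c i\<bar> \<le> e"
    using ex by blast
  have approx: "\<exists>f. lip0 p f \<and> lipnorm f \<le> 2 * real n \<and> (\<forall>i. \<bar>b i - T f i\<bar> \<le> r/4)"
    if b: "\<forall>i. \<bar>b i\<bar> \<le> r" for b
  proof -
    have bb: "bounded (range (\<lambda>i. b0 i + b i))"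
    proof -
      obtain K where K: "\<forall>z\<in>range b0. norm z \<le> K" using b0 unfolding bounded_iff by blast
      have "\<forall>z\<in>range (\<lambda>i. b0 i + b i). norm z \<le> K + r"
        using K b by (auto intro!: order_trans[OF abs_triangle_ineq] add_mono)
      then show ?thesis unfolding bounded_iff by blast
    qed
    obtain c1 where c1: "c1 \<in> A n" "\<forall>i. \<bar>(b0 i + b i) - c1 i\<bar> \<le> r/8"
      using approx0[OF bb _ , of "r/8"] b r by auto
    obtain c0 where c0: "c0 \<in> A n" "\<forall>i. \<bar>b0 i - c0 i\<bar> \<le> r/8"
      using approx0[OF b0 _ , of "r/8"] r by auto
    obtain g1 where g1: "c1 = T g1" "lip0 p g1" "lipnorm g1 \<le> real n" using c1(1) unfolding A_def by blast
    obtain g0 where g0: "c0 = T g0" "lip0 p g0" "lipnorm g0 \<le> real n" using c0(1) unfolding A_def by blast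
    define f where "f = (\<lambda>z. g1 z - g0 z)"
    have "lip0 p f" "lipnorm f \<le> lipnorm g1 + lipnorm g0" unfolding f_def using lip0_diff[OF g1(2) g0(2)] by auto
    moreover have "T f i = c1 i - c0 i" for i unfolding f_def T_def g1 g0 mol_diff by simp
    moreover have "\<bar>b i - (c1 i - c0 i)\<bar> \<le> r/4" for i using c1(2)[rule_format, of i] c0(2)[rule_format, of i] by linarith
    ultimately show ?thesis using g1(3) g0(3) by (intro exI[of _ f]) auto
  qed
  define C where "C = (2 * real n + 1) / r"
  have C: "C > 0" unfolding C_def using r by simp
  define \<delta> where "\<delta> = 1 / (4 * C)"
  have \<delta>: "\<delta> > 0" unfolding \<delta>_def using C by simp
  show ?thesis
  proof (intro exI[of _ \<delta>] conjI \<delta> allI impI)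
    fix u v :: "'i \<Rightarrow> 'a"
    assume uv: "(\<forall>i. u i \<noteq> v i) \<and> (\<forall>i. mol_dist p (x i, y i) (u i, v i) < \<delta>)"
    show "lip_interpolating p u v"
    proof (rule iterate_interp[of C])
      show "C \<ge> 0" using C by simp
      fix b :: "'i \<Rightarrow> real" and \<beta> :: real
      assume \<beta>: "\<beta> \<ge> 0" and bb: "\<forall>i. \<bar>b i\<bar> \<le> \<beta>"
      show "\<exists>f. lip0 p f \<and> lipnorm f \<le> C * \<beta> \<and> (\<forall>i. \<bar>mol (u i) (v i) f - b i\<bar> \<le> \<beta> / 2)"
      proof (cases "\<beta> = 0")
        case True
        then have "b i = 0" for i using bb by auto
        moreover have "lip0 p (\<lambda>z::'a. 0)" by (rule lip0_zero)
        moreover have "lipnorm (\<lambda>z::'a. 0::real) \<le> C * \<beta>" using lip0_zero(2) True by simp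
        ultimately show ?thesis using True by (intro exI[of _ "\<lambda>z::'a. 0"]) (simp add: mol_zero)
      next
        case False
        then have \<beta>p: "\<beta> > 0" using \<beta> by simp
        define b' where "b' i = (r/\<beta>) * b i" for i
        have "\<bar>b' i\<bar> \<le> r" for i
        proof -
          have "\<bar>b' i\<bar> = (r/\<beta>) * \<bar>b i\<bar>" unfolding b'_def using r \<beta>p by (simp add: abs_mult)
          also have "\<dots> \<le> (r/\<beta>) * \<beta>" using bb r \<beta>p by (intro mult_left_mono) auto
          also have "\<dots> = r" using \<beta>p by simp
          finally show ?thesis .
        qed
        then obtain f' where f': "lip0 p f'" "lipnorm f' \<le> 2 * real n" "\<forall>i. \<bar>b' i - T f' i\<bar> \<le> r/4"
          using approx by blast
        define f where "f = (\<lambda>z. (\<beta>/r) * f' z)"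
        have f: "lip0 p f" "lipnorm f \<le> (\<beta>/r) * lipnorm f'"
          unfolding f_def using lip0_scale[OF f'(1), of "\<beta>/r"] r \<beta>p by auto
        have "(\<beta>/r) * lipnorm f' \<le> (\<beta>/r) * (2 * real n + 1)"
          using f'(2) r \<beta>p by (intro mult_left_mono) auto
        also have "\<dots> = C * \<beta>" unfolding C_def by simp
        finally have fC: "lipnorm f \<le> C * \<beta>" using f(2) by linarith
        have "\<bar>mol (u i) (v i) f - b i\<bar> \<le> \<beta> / 2" for i
        proof -
          have Tf: "T f i = (\<beta>/r) * T f' i" unfolding T_def f_def mol_scale ..
          have bi: "b i = (\<beta>/r) * b' i" unfolding b'_def using r \<beta>p by simp
          have dd: "(\<beta>/r) * b' i - (\<beta>/r) * T f' i = (\<beta>/r) * (b' i - T f' i)" by (simp add: right_diff_distrib)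
          have ab: "\<bar>\<beta>/r\<bar> = \<beta>/r" using r \<beta>p by simp
          have "\<bar>b i - T f i\<bar> = (\<beta>/r) * \<bar>b' i - T f' i\<bar>"
            unfolding Tf bi dd abs_mult ab ..
          also have "\<dots> \<le> (\<beta>/r) * (r/4)" using f'(3) r \<beta>p by (intro mult_left_mono) auto
          also have "\<dots> = \<beta>/4" using r by simp
          finally have e1: "\<bar>b i - T f i\<bar> \<le> \<beta>/4" .
          have "\<bar>T f i - mol (u i) (v i) f\<bar> \<le> mol_dist p (x i, y i) (u i, v i) * lipnorm f"
            unfolding T_def by (rule mol_dist_bound[OF f(1)])
          also have "\<dots> \<le> \<delta> * lipnorm f"
            using uv lipnorm_nonneg[OF f(1)] by (intro mult_right_mono) (auto intro: less_imp_le)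
          also have "\<dots> \<le> \<delta> * (C * \<beta>)" using fC \<delta> by (intro mult_left_mono) auto
          also have "\<dots> = \<beta>/4" unfolding \<delta>_def using C by simp
          finally have e2: "\<bar>T f i - mol (u i) (v i) f\<bar> \<le> \<beta>/4" .
          show ?thesis using e1 e2 by linarith
        qed
        then show ?thesis using f(1) fC by blast
      qed
    qed
  qed
qed

end
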